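(* Let $F_1,\ldots,F_N$ be distribution functions on $\mathbb{R}$ with finite variances, and for $k=1,\ldots,N$ let $(x^{(k)}_1,\ldots,x^{(k)}_{n_k})$ be a sample of size $n_k\ge1$ from $F_k(x-\theta)$, the $N$ samples being independent. For ${\bf s}=\{i_1,\ldots,i_m\}\subset\{1,\ldots,N\}$ let $t^{({\bf s})}_{n({\bf s})}$ be the Pitman estimator of $\theta$ from the pooled sample of size $n({\bf s})=n_{i_1}+\cdots+n_{i_m}$ consisting of all samples with indices in ${\bf s}$, and let $t_n^{(1,\ldots,N)}$ be the Pitman estimator of $\theta$ from the pooled sample of all $n=n_1+\cdots+n_N$ observations. Then for any $1\le m\le N$, $$\frac{1}{\mathrm{var}(t_n^{(1,\ldots,N)})}\ \ge\ \frac{1}{\binom{N-1}{m-1}}\sum_{\bf s}\frac{1}{\mathrm{var}(t^{({\bf s})}_{n({\bf s})})},$$ the sum being over all subsets ${\bf s}$ of $\{1,\ldots,N\}$ with exactly $m$ elements.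
   Context: A sample of size $n_k$ from $F_k(x-\theta)$ ($\theta\in\mathbb{R}$ unknown) consists of i.i.d. observations $x_j$ with $x_j-\theta\sim F_k$. For a collection of independent observations $z_1,\ldots,z_M$ each of the form $z_j=\theta+\varepsilon_j$ with $\varepsilon_j$ having a fixed distribution not depending on $\theta$, an estimator $t(z_1,\ldots,z_M)$ is equivariant if $t(z_1+c,\ldots,z_M+c)=t(z_1,\ldots,z_M)+c$ for all $c\in\mathbb{R}$, and the Pitman estimator is the equivariant estimator of minimal variance (given finite variances, it equals $\bar z-E_0(\bar z\mid z_1-\bar z,\ldots,z_M-\bar z)$, $E_0$ being expectation under $\theta=0$). *)

theory Defs
  imports "HOL-Probability.Probability"
begin

text \<open>Observations of the pooled sample with index set s: pairs (k,j) with k in s, j < n k;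
  observation (k,j) is the j-th observation of the k-th sample.\<close>
definition obs_index :: "(nat \<Rightarrow> nat) \<Rightarrow> nat set \<Rightarrow> (nat \<times> nat) set" where
  "obs_index n s = {(k, j). k \<in> s \<and> j < n k}"

definition sample_measure ::
  "(nat \<Rightarrow> real measure) \<Rightarrow> (nat \<Rightarrow> nat) \<Rightarrow> nat set \<Rightarrow> real \<Rightarrow> ((nat \<times> nat) \<Rightarrow> real) measure" where
  "sample_measure F n s \<theta> =
     PiM (obs_index n s) (\<lambda>(k, j). distr (F k) borel (\<lambda>x. x + \<theta>))"

definition sample_space :: "(nat \<Rightarrow> nat) \<Rightarrow> nat set \<Rightarrow> ((nat \<times> nat) \<Rightarrow> real) measure" where
  "sample_space n s = PiM (obs_index n s) (\<lambda>_. borel)"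

definition equivariant ::
  "(nat \<Rightarrow> nat) \<Rightarrow> nat set \<Rightarrow> (((nat \<times> nat) \<Rightarrow> real) \<Rightarrow> real) \<Rightarrow> bool" where
  "equivariant n s t \<longleftrightarrow>
     (\<forall>z \<in> space (sample_space n s). \<forall>c::real.
        t (\<lambda>i\<in>obs_index n s. z i + c) = t z + c)"

definition est_var :: "'a measure \<Rightarrow> ('a \<Rightarrow> real) \<Rightarrow> real" where
  "est_var M t = (\<integral>x. (t x - (\<integral>y. t y \<partial>M))\<^sup>2 \<partial>M)"

definition equivariant_estimator ::
  "(nat \<Rightarrow> real measure) \<Rightarrow> (nat \<Rightarrow> nat) \<Rightarrow> nat set \<Rightarrow> (((nat \<times> nat) \<Rightarrow> real) \<Rightarrow> real) \<Rightarrow> bool" where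
  "equivariant_estimator F n s t \<longleftrightarrow>
     t \<in> borel_measurable (sample_space n s) \<and> equivariant n s t \<and>
     (\<forall>\<theta>. integrable (sample_measure F n s \<theta>) (\<lambda>z. (t z)\<^sup>2))"

definition is_pitman ::
  "(nat \<Rightarrow> real measure) \<Rightarrow> (nat \<Rightarrow> nat) \<Rightarrow> nat set \<Rightarrow> (((nat \<times> nat) \<Rightarrow> real) \<Rightarrow> real) \<Rightarrow> bool" where
  "is_pitman F n s t \<longleftrightarrow>
     equivariant_estimator F n s t \<and>
     (\<forall>t' \<theta>. equivariant_estimator F n s t' \<longrightarrow>
        est_var (sample_measure F n s \<theta>) t \<le> est_var (sample_measure F n s \<theta>) t')"

end

theory Submission
  imports Defs
begin



lemma (in prob_space) sq_integral_le:
  fixes g :: "_ \<Rightarrow> real" assumes gm[measurable]: "g \<in> borel_measurable M"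
  shows "ennreal ((\<integral>x. g x \<partial>M)^2) \<le> (\<integral>\<^sup>+x. ennreal ((g x)^2) \<partial>M)"
proof cases
  assume sq: "integrable M (\<lambda>x. (g x)^2)"
  then have ig: "integrable M g" by (rule square_integrable_imp_integrable[OF gm])
  have "0 \<le> variance g" by (simp add: integral_nonneg_AE)
  then have "(\<integral>x. g x \<partial>M)^2 \<le> (\<integral>x. (g x)^2 \<partial>M)"
    using variance_eq[OF ig sq] by simp
  then show ?thesis using sq by (simp add: nn_integral_eq_integral)
next
  assume nsq: "\<not> integrable M (\<lambda>x. (g x)^2)"
  have "\<not> (\<integral>\<^sup>+x. ennreal (norm ((g x)^2)) \<partial>M) < \<infinity>"
    using nsq by (simp add: integrable_iff_bounded)
  then have "(\<integral>\<^sup>+x. ennreal ((g x)^2) \<partial>M) = \<top>" by (simp add: less_top[symmetric])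
  then show ?thesis by simp
qed

locale vdrop = finite_product_prob_space M I for M :: "'i \<Rightarrow> 'a measure" and I :: "'i set" +
  fixes grp :: "'i \<Rightarrow> 'g"
begin

abbreviation "P \<equiv> PiM I M"

lemma finI[simp]: "finite I" by (rule finite_index)

sublocale PP: pair_sigma_finite P P
  by unfold_locales

definition mix :: "'g \<Rightarrow> ('i \<Rightarrow> 'a) \<Rightarrow> ('i \<Rightarrow> 'a) \<Rightarrow> ('i \<Rightarrow> 'a)" where
  "mix k x y = (\<lambda>i\<in>I. if grp i = k then y i else x i)"

lemma mix_measurable[measurable]: "(\<lambda>(x,y). mix k x y) \<in> measurable (P \<Otimes>\<^sub>M P) P"
  unfolding mix_def case_prod_beta
  by (intro measurable_restrict) auto

lemma mix_mix: "mix k (mix k x y) z = mix k x z"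
  by (auto simp: mix_def)

lemma mix_distr: "distr (P \<Otimes>\<^sub>M P) P (\<lambda>(x,y). mix k x y) = P"
proof (rule PiM_eqI)
  show "finite I" by (rule finite_index)
  show "sets (distr (P \<Otimes>\<^sub>M P) P (\<lambda>(x,y). mix k x y)) = sets P" by simp
  fix A assume A: "\<And>i. i \<in> I \<Longrightarrow> A i \<in> sets (M i)"
  define A1 where "A1 i = (if grp i = k then space (M i) else A i)" for i
  define A2 where "A2 i = (if grp i = k then A i else space (M i))" for i
  have A1: "i \<in> I \<Longrightarrow> A1 i \<in> sets (M i)" and A2: "i \<in> I \<Longrightarrow> A2 i \<in> sets (M i)" for i
    using A by (auto simp: A1_def A2_def)
  have Asp: "i \<in> I \<Longrightarrow> A i \<subseteq> space (M i)" for i using A sets.sets_into_space by blast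
  have eq: "(\<lambda>(x,y). mix k x y) -` (Pi\<^sub>E I A) \<inter> space (P \<Otimes>\<^sub>M P) = Pi\<^sub>E I A1 \<times> Pi\<^sub>E I A2"
    using Asp by (auto simp: space_pair_measure space_PiM PiE_iff mix_def A1_def A2_def split: if_splits) blast+
  have "emeasure (distr (P \<Otimes>\<^sub>M P) P (\<lambda>(x,y). mix k x y)) (Pi\<^sub>E I A) =
     emeasure (P \<Otimes>\<^sub>M P) (Pi\<^sub>E I A1 \<times> Pi\<^sub>E I A2)"
    using A by (subst emeasure_distr) (auto simp: eq intro!: sets_PiM_I_finite)
  also have "\<dots> = emeasure P (Pi\<^sub>E I A1) * emeasure P (Pi\<^sub>E I A2)"
    using A1 A2 by (intro emeasure_pair_measure_Times sets_PiM_I_finite) auto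
  also have "\<dots> = (\<Prod>i\<in>I. emeasure (M i) (A1 i)) * (\<Prod>i\<in>I. emeasure (M i) (A2 i))"
    using A1 A2 by (simp add: emeasure_PiM)
  also have "\<dots> = (\<Prod>i\<in>I. emeasure (M i) (A1 i) * emeasure (M i) (A2 i))"
    by (simp add: prod.distrib)
  also have "\<dots> = (\<Prod>i\<in>I. emeasure (M i) (A i))"
    by (intro prod.cong) (auto simp: A1_def A2_def M.emeasure_space_1)
  finally show "emeasure (distr (P \<Otimes>\<^sub>M P) P (\<lambda>(x,y). mix k x y)) (Pi\<^sub>E I A) = (\<Prod>i\<in>I. emeasure (M i) (A i))" .
qed

lemma mix_measurable'[measurable]: "(\<lambda>z. mix k (fst z) (snd z)) \<in> measurable (P \<Otimes>\<^sub>M P) P"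
  using mix_measurable[of k] by (simp add: case_prod_beta)

lemma mix_measurable1: "x \<in> space P \<Longrightarrow> (\<lambda>y. mix k x y) \<in> measurable P P"
  using measurable_compose[OF measurable_Pair2 mix_measurable'] by simp

lemma nn_mix:
  assumes [measurable]: "h \<in> borel_measurable P"
  shows "(\<integral>\<^sup>+x. h x \<partial>P) = (\<integral>\<^sup>+x. \<integral>\<^sup>+y. h (mix k x y) \<partial>P \<partial>P)"
proof -
  have "(\<integral>\<^sup>+x. h x \<partial>P) = (\<integral>\<^sup>+x. h x \<partial>distr (P \<Otimes>\<^sub>M P) P (\<lambda>(x,y). mix k x y))"
    by (simp add: mix_distr)
  also have "\<dots> = (\<integral>\<^sup>+z. h (mix k (fst z) (snd z)) \<partial>(P \<Otimes>\<^sub>M P))"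
    by (subst nn_integral_distr) (auto simp: case_prod_beta)
  also have "\<dots> = (\<integral>\<^sup>+x. \<integral>\<^sup>+y. h (mix k x y) \<partial>P \<partial>P)"
    by (subst nn_integral_fst[symmetric]) auto
  finally show ?thesis .
qed

lemma int_mix:
  fixes h :: "_ \<Rightarrow> real"
  assumes h: "integrable P h"
  shows "(\<integral>x. h x \<partial>P) = (\<integral>x. \<integral>y. h (mix k x y) \<partial>P \<partial>P)"
proof -
  have [measurable]: "h \<in> borel_measurable P" using h by auto
  have "integrable (distr (P \<Otimes>\<^sub>M P) P (\<lambda>(x,y). mix k x y)) h" by (simp add: mix_distr h)
  then have i2: "integrable (P \<Otimes>\<^sub>M P) (\<lambda>z. h (mix k (fst z) (snd z)))"
    by (subst (asm) integrable_distr_eq) (auto simp: case_prod_beta)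
  have "(\<integral>x. h x \<partial>P) = (\<integral>x. h x \<partial>distr (P \<Otimes>\<^sub>M P) P (\<lambda>(x,y). mix k x y))"
    by (simp add: mix_distr)
  also have "\<dots> = (\<integral>z. h (mix k (fst z) (snd z)) \<partial>(P \<Otimes>\<^sub>M P))"
    by (subst integral_distr) (auto simp: case_prod_beta)
  also have "\<dots> = (\<integral>x. \<integral>y. h (mix k x y) \<partial>P \<partial>P)"
    using PP.integral_fst'[OF i2] by simp
  finally show ?thesis .
qed

definition Q :: "'g \<Rightarrow> (('i \<Rightarrow> 'a) \<Rightarrow> real) \<Rightarrow> ('i \<Rightarrow> 'a) \<Rightarrow> real" where
  "Q k f x = (\<integral>y. f (mix k x y) \<partial>P)"

definition L2 :: "(('i \<Rightarrow> 'a) \<Rightarrow> real) \<Rightarrow> bool" where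
  "L2 f \<longleftrightarrow> f \<in> borel_measurable P \<and> integrable P (\<lambda>x. (f x)^2)"

lemma Q_mix: "Q k f (mix k x y) = Q k f x"
  by (simp add: Q_def mix_mix)

lemma Q_meas:
  assumes [measurable]: "f \<in> borel_measurable P"
  shows "Q k f \<in> borel_measurable P"
proof -
  have "(\<lambda>z. f (mix k (fst z) (snd z))) \<in> borel_measurable (P \<Otimes>\<^sub>M P)" by measurable
  then have "case_prod (\<lambda>x y. f (mix k x y)) \<in> borel_measurable (P \<Otimes>\<^sub>M P)"
    by (simp add: case_prod_beta)
  then show ?thesis unfolding Q_def[abs_def]
    by (rule borel_measurable_lebesgue_integral)
qed

lemma Q_L2:
  assumes "L2 f"
  shows "L2 (Q k f)"
proof -
  have fm[measurable]: "f \<in> borel_measurable P" and sq: "integrable P (\<lambda>x. (f x)^2)"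
    using assms by (auto simp: L2_def)
  have qm[measurable]: "Q k f \<in> borel_measurable P" by (rule Q_meas) simp
  have "(\<integral>\<^sup>+x. ennreal ((Q k f x)^2) \<partial>P) \<le> (\<integral>\<^sup>+x. \<integral>\<^sup>+y. ennreal ((f (mix k x y))^2) \<partial>P \<partial>P)"
  proof (rule nn_integral_mono)
    fix x assume x: "x \<in> space P"
    have "(\<lambda>y. f (mix k x y)) \<in> borel_measurable P"
      using measurable_compose[OF mix_measurable1[OF x] fm] .
    then show "ennreal ((Q k f x)^2) \<le> (\<integral>\<^sup>+y. ennreal ((f (mix k x y))^2) \<partial>P)"
      unfolding Q_def by (rule sq_integral_le)
  qed
  also have "\<dots> = (\<integral>\<^sup>+x. ennreal ((f x)^2) \<partial>P)"
    by (rule nn_mix[symmetric]) simp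
  also have "\<dots> < \<infinity>"
    using sq by (simp add: integrable_iff_bounded)
  finally have "(\<integral>\<^sup>+x. ennreal (norm ((Q k f x)^2)) \<partial>P) < \<infinity>" by simp
  then show ?thesis unfolding L2_def using qm by (simp add: integrable_iff_bounded)
qed

lemma L2_int: assumes "L2 f" shows "integrable P f"
proof -
  have m: "f \<in> borel_measurable P" and s: "integrable P (\<lambda>x. (f x)^2)" using assms by (auto simp: L2_def)
  show ?thesis by (rule square_integrable_imp_integrable[OF m s])
qed

lemma L2_mult: assumes "L2 f" "L2 g" shows "integrable P (\<lambda>x. f x * g x)"
proof (rule Bochner_Integration.integrable_bound[where M=P and f="\<lambda>x. (f x)^2 + (g x)^2" and g="\<lambda>x. f x * g x"])
  show "integrable P (\<lambda>x. (f x)^2 + (g x)^2)" using assms by (auto simp: L2_def)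
  show "(\<lambda>x. f x * g x) \<in> borel_measurable P" using assms by (auto simp: L2_def)
  show "AE x in P. norm (f x * g x) \<le> norm ((f x)^2 + (g x)^2)"
  proof (intro AE_I2)
    fix x
    have "2 * \<bar>f x * g x\<bar> \<le> (f x)^2 + (g x)^2"
      using sum_squares_bound[of "\<bar>f x\<bar>" "\<bar>g x\<bar>"] by (simp add: abs_mult power2_eq_square)
    moreover have "\<bar>f x * g x\<bar> \<ge> 0" by simp
    ultimately show "norm (f x * g x) \<le> norm ((f x)^2 + (g x)^2)" by simp
  qed
qed

lemma L2_add: "L2 f \<Longrightarrow> L2 g \<Longrightarrow> L2 (\<lambda>x. f x + g x)"
  using L2_mult[of f g] by (auto simp: L2_def power2_eq_square ring_distribs)

lemma L2_cmult: "L2 f \<Longrightarrow> L2 (\<lambda>x. c * f x)"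
  by (auto simp: L2_def power_mult_distrib)

lemma L2_const: "L2 (\<lambda>x. c)"
  by (auto simp: L2_def)

lemma L2_diff: "L2 f \<Longrightarrow> L2 g \<Longrightarrow> L2 (\<lambda>x. f x - g x)"
  using L2_add[of f "\<lambda>x. (-1) * g x"] L2_cmult[of g "-1"] by simp

lemma L2_sum: "(\<And>a. a \<in> X \<Longrightarrow> L2 (\<phi> a)) \<Longrightarrow> L2 (\<lambda>x. \<Sum>a\<in>X. \<phi> a x)"
proof (induction X rule: infinite_finite_induct)
  case (infinite A) then show ?case by (simp add: L2_const)
next
  case empty then show ?case by (simp add: L2_const)
next
  case (insert a A) then show ?case using L2_add[of "\<phi> a" "\<lambda>x. \<Sum>a\<in>A. \<phi> a x"] by simp
qed

lemma Q_mean: assumes "integrable P f" shows "(\<integral>x. Q k f x \<partial>P) = (\<integral>x. f x \<partial>P)"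
  unfolding Q_def using int_mix[OF assms] by simp

lemma Q_orth:
  assumes f: "L2 f" and g: "L2 g"
  shows "(\<integral>x. Q k f x * g x \<partial>P) = (\<integral>x. Q k f x * Q k g x \<partial>P)"
proof -
  have "(\<integral>x. Q k f x * g x \<partial>P) = (\<integral>x. \<integral>y. Q k f (mix k x y) * g (mix k x y) \<partial>P \<partial>P)"
    by (rule int_mix[OF L2_mult[OF Q_L2[OF f] g]])
  also have "\<dots> = (\<integral>x. Q k f x * Q k g x \<partial>P)"
    unfolding Q_mix by (simp add: Q_def[of k g])
  finally show ?thesis .
qed


definition dep :: "'g set \<Rightarrow> (('i \<Rightarrow> 'a) \<Rightarrow> real) \<Rightarrow> bool" where
  "dep D f \<longleftrightarrow> (\<forall>x y. (\<forall>i\<in>I. grp i \<in> D \<longrightarrow> x i = y i) \<longrightarrow> f x = f y)"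

lemma Q_id: assumes "dep D f" "k \<notin> D" shows "Q k f x = f x"
proof -
  have "f (mix k x y) = f x" for y
  proof -
    have "\<forall>i\<in>I. grp i \<in> D \<longrightarrow> mix k x y i = x i" using assms(2) by (auto simp: mix_def)
    then show ?thesis using assms(1) unfolding dep_def by blast
  qed
  then show ?thesis unfolding Q_def by (simp add: P.prob_space)
qed

lemma Q_dep: assumes "dep D f" shows "dep (D - {k}) (Q k f)"
  unfolding dep_def
proof (intro allI impI)
  fix x x' :: "'i \<Rightarrow> 'a" assume a: "\<forall>i\<in>I. grp i \<in> D - {k} \<longrightarrow> x i = x' i"
  have "f (mix k x y) = f (mix k x' y)" for y
  proof -
    have "\<forall>i\<in>I. grp i \<in> D \<longrightarrow> mix k x y i = mix k x' y i" using a by (auto simp: mix_def)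
    then show ?thesis using assms(1) unfolding dep_def by blast
  qed
  then show "Q k f x = Q k f x'" unfolding Q_def by simp
qed

lemma dep_empty: "dep {} f \<Longrightarrow> f x = f y"
  unfolding dep_def by blast

lemma sq_split:
  assumes u: "L2 u" and r: "L2 r" and o: "(\<integral>x. u x * r x \<partial>P) = 0"
  shows "(\<integral>x. (u x + r x)^2 \<partial>P) = (\<integral>x. (u x)^2 \<partial>P) + (\<integral>x. (r x)^2 \<partial>P)"
proof -
  have e: "(\<lambda>x. (u x + r x)^2) = (\<lambda>x. ((u x)^2 + 2 * (u x * r x)) + (r x)^2)"
    by (auto simp: power2_eq_square algebra_simps)
  have iu: "integrable P (\<lambda>x. (u x)^2)" and ir: "integrable P (\<lambda>x. (r x)^2)"
    using u r by (auto simp: L2_def)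
  have iur: "integrable P (\<lambda>x. u x * r x)" by (rule L2_mult[OF u r])
  have "(\<integral>x. ((u x)^2 + 2 * (u x * r x)) + (r x)^2 \<partial>P) = (\<integral>x. (u x)^2 + 2 * (u x * r x) \<partial>P) + (\<integral>x. (r x)^2 \<partial>P)"
    using iu ir iur by (intro Bochner_Integration.integral_add) auto
  also have "(\<integral>x. (u x)^2 + 2 * (u x * r x) \<partial>P) = (\<integral>x. (u x)^2 \<partial>P) + (\<integral>x. 2 * (u x * r x) \<partial>P)"
    using iu ir iur by (intro Bochner_Integration.integral_add) auto
  also have "(\<integral>x. 2 * (u x * r x) \<partial>P) = 0" using o by simp
  finally show ?thesis unfolding e by simp
qed

lemma vdrop_main:
  fixes K :: nat
  assumes "finite J"
  shows "finite X \<Longrightarrow> (\<forall>a\<in>X. L2 (\<phi> a) \<and> dep (D a) (\<phi> a) \<and> D a \<subseteq> J \<and> (\<integral>x. \<phi> a x \<partial>P) = 0)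
    \<Longrightarrow> (\<forall>j. card {a\<in>X. j \<in> D a} \<le> K)
    \<Longrightarrow> (\<integral>x. (\<Sum>a\<in>X. \<phi> a x)^2 \<partial>P) \<le> K * (\<Sum>a\<in>X. \<integral>x. (\<phi> a x)^2 \<partial>P)"
  using assms
proof (induction J arbitrary: \<phi> D rule: finite_induct)
  case empty
  have z: "\<phi> a x = 0" if "a \<in> X" for a x
  proof -
    have d: "dep {} (\<phi> a)" and m: "(\<integral>x. \<phi> a x \<partial>P) = 0" using empty.prems(2) that by auto
    have "(\<integral>y. \<phi> a y \<partial>P) = (\<integral>y. \<phi> a x \<partial>P)" using dep_empty[OF d] by metis
    then show ?thesis using m by (simp add: P.prob_space)
  qed
  have "(\<integral>x. (\<Sum>a\<in>X. \<phi> a x)^2 \<partial>P) = 0" using z by simp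
  moreover have "0 \<le> K * (\<Sum>a\<in>X. \<integral>x. (\<phi> a x)^2 \<partial>P)"
    by (intro mult_nonneg_nonneg sum_nonneg integral_nonneg_AE) auto
  ultimately show ?case by simp
next
  case (insert k J)
  note fX = insert.prems(1) and H = insert.prems(2) and deg = insert.prems(3)
  define \<psi> where "\<psi> a = Q k (\<phi> a)" for a
  define \<rho> where "\<rho> a x = \<phi> a x - \<psi> a x" for a x
  have L2\<phi>: "a \<in> X \<Longrightarrow> L2 (\<phi> a)" for a using H by auto
  have L2\<psi>: "a \<in> X \<Longrightarrow> L2 (\<psi> a)" for a using L2\<phi> Q_L2 \<psi>_def by auto
  have L2\<rho>: "a \<in> X \<Longrightarrow> L2 (\<rho> a)" for a
    using L2\<phi> L2\<psi> L2_diff[of "\<phi> a" "\<psi> a"] unfolding \<rho>_def[abs_def] by auto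
  have H': "\<forall>a\<in>X. L2 (\<psi> a) \<and> dep (D a - {k}) (\<psi> a) \<and> D a - {k} \<subseteq> J \<and> (\<integral>x. \<psi> a x \<partial>P) = 0"
  proof
    fix a assume a: "a \<in> X"
    have "(\<integral>x. \<psi> a x \<partial>P) = (\<integral>x. \<phi> a x \<partial>P)"
      unfolding \<psi>_def by (rule Q_mean[OF L2_int[OF L2\<phi>[OF a]]])
    then show "L2 (\<psi> a) \<and> dep (D a - {k}) (\<psi> a) \<and> D a - {k} \<subseteq> J \<and> (\<integral>x. \<psi> a x \<partial>P) = 0"
      using a H L2\<psi> Q_dep unfolding \<psi>_def by auto
  qed
  have deg': "\<forall>j. card {a\<in>X. j \<in> D a - {k}} \<le> K"
  proof
    fix j
    have "card {a\<in>X. j \<in> D a - {k}} \<le> card {a\<in>X. j \<in> D a}"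
      using fX by (intro card_mono) auto
    then show "card {a\<in>X. j \<in> D a - {k}} \<le> K" using deg by (meson le_trans)
  qed
  have IH: "(\<integral>x. (\<Sum>a\<in>X. \<psi> a x)^2 \<partial>P) \<le> K * (\<Sum>a\<in>X. \<integral>x. (\<psi> a x)^2 \<partial>P)"
    using insert.IH[OF fX H' deg'] by simp
  define B where "B = {a\<in>X. k \<in> D a}"
  have fB: "finite B" and BX: "B \<subseteq> X" using fX by (auto simp: B_def)
  have cB: "card B \<le> K" using deg by (simp add: B_def)
  have \<rho>0: "a \<in> X \<Longrightarrow> a \<notin> B \<Longrightarrow> \<rho> a x = 0" for a x
    using H Q_id[of "D a" "\<phi> a" k x] unfolding \<rho>_def \<psi>_def B_def by auto
  have orth: "(\<integral>x. \<psi> a x * \<rho> b x \<partial>P) = 0" if "a \<in> X" "b \<in> X" for a b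
  proof -
    have "(\<integral>x. \<psi> a x * \<rho> b x \<partial>P) = (\<integral>x. \<psi> a x * \<phi> b x \<partial>P) - (\<integral>x. \<psi> a x * \<psi> b x \<partial>P)"
      unfolding \<rho>_def right_diff_distrib
      using L2_mult[OF L2\<psi>[OF that(1)] L2\<phi>[OF that(2)]] L2_mult[OF L2\<psi>[OF that(1)] L2\<psi>[OF that(2)]]
      by (rule Bochner_Integration.integral_diff)
    also have "\<dots> = 0"
      unfolding \<psi>_def using Q_orth[OF L2\<phi>[OF that(1)] L2\<phi>[OF that(2)]] by simp
    finally show ?thesis .
  qed
  define U where "U x = (\<Sum>a\<in>X. \<psi> a x)" for x
  define R where "R x = (\<Sum>a\<in>X. \<rho> a x)" for x
  have LU: "L2 U" unfolding U_def[abs_def] by (rule L2_sum) (rule L2\<psi>)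
  have LR: "L2 R" unfolding R_def[abs_def] by (rule L2_sum) (rule L2\<rho>)
  have UR: "(\<integral>x. U x * R x \<partial>P) = 0"
  proof -
    have "(\<integral>x. U x * R x \<partial>P) = (\<integral>x. (\<Sum>a\<in>X. \<Sum>b\<in>X. \<psi> a x * \<rho> b x) \<partial>P)"
      unfolding U_def R_def by (simp add: sum_product)
    also have "\<dots> = (\<Sum>a\<in>X. \<integral>x. (\<Sum>b\<in>X. \<psi> a x * \<rho> b x) \<partial>P)"
      using L2_mult[OF L2\<psi> L2\<rho>] by (intro Bochner_Integration.integral_sum Bochner_Integration.integrable_sum) auto
    also have "\<dots> = (\<Sum>a\<in>X. \<Sum>b\<in>X. \<integral>x. \<psi> a x * \<rho> b x \<partial>P)"
      using L2_mult[OF L2\<psi> L2\<rho>] by (intro sum.cong refl Bochner_Integration.integral_sum) auto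
    also have "\<dots> = 0" using orth by simp
    finally show ?thesis .
  qed
  have S: "(\<Sum>a\<in>X. \<phi> a x) = U x + R x" for x
    unfolding U_def R_def \<rho>_def by (simp add: sum.distrib[symmetric])
  have RB: "R x = (\<Sum>a\<in>B. \<rho> a x)" for x
    unfolding R_def using \<rho>0 BX fX by (intro sum.mono_neutral_right) auto
  have "(\<integral>x. (R x)^2 \<partial>P) \<le> (\<integral>x. card B * (\<Sum>a\<in>B. (\<rho> a x)^2) \<partial>P)"
  proof (rule integral_mono)
    show "integrable P (\<lambda>x. (R x)^2)" using LR by (simp add: L2_def)
    show "integrable P (\<lambda>x. real (card B) * (\<Sum>a\<in>B. (\<rho> a x)^2))"
      using L2\<rho> BX by (intro integrable_mult_right Bochner_Integration.integrable_sum) (auto simp: L2_def)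
    show "(R x)^2 \<le> real (card B) * (\<Sum>a\<in>B. (\<rho> a x)^2)" for x
      unfolding RB using sum_squared_le_sum_of_squares[of "\<lambda>a. \<rho> a x" B] by (simp add: mult.commute)
  qed
  also have "\<dots> = card B * (\<Sum>a\<in>B. \<integral>x. (\<rho> a x)^2 \<partial>P)"
    using L2\<rho> BX by (subst integral_mult_right_zero, subst Bochner_Integration.integral_sum) (auto simp: L2_def)
  also have "\<dots> \<le> K * (\<Sum>a\<in>B. \<integral>x. (\<rho> a x)^2 \<partial>P)"
    using cB by (intro mult_right_mono sum_nonneg integral_nonneg_AE) auto
  also have "(\<Sum>a\<in>B. \<integral>x. (\<rho> a x)^2 \<partial>P) = (\<Sum>a\<in>X. \<integral>x. (\<rho> a x)^2 \<partial>P)"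
    using \<rho>0 BX fX by (intro sum.mono_neutral_left) auto
  finally have Rb: "(\<integral>x. (R x)^2 \<partial>P) \<le> K * (\<Sum>a\<in>X. \<integral>x. (\<rho> a x)^2 \<partial>P)" .
  have pyth: "(\<integral>x. (\<phi> a x)^2 \<partial>P) = (\<integral>x. (\<psi> a x)^2 \<partial>P) + (\<integral>x. (\<rho> a x)^2 \<partial>P)" if "a \<in> X" for a
  proof -
    have "(\<integral>x. (\<phi> a x)^2 \<partial>P) = (\<integral>x. (\<psi> a x + \<rho> a x)^2 \<partial>P)" unfolding \<rho>_def by simp
    also have "\<dots> = (\<integral>x. (\<psi> a x)^2 \<partial>P) + (\<integral>x. (\<rho> a x)^2 \<partial>P)"
      using sq_split[OF L2\<psi>[OF that] L2\<rho>[OF that] orth[OF that that]] .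
    finally show ?thesis .
  qed
  have "(\<integral>x. (\<Sum>a\<in>X. \<phi> a x)^2 \<partial>P) = (\<integral>x. (U x + R x)^2 \<partial>P)" unfolding S ..
  also have "\<dots> = (\<integral>x. (U x)^2 \<partial>P) + (\<integral>x. (R x)^2 \<partial>P)" by (rule sq_split[OF LU LR UR])
  also have "\<dots> \<le> K * (\<Sum>a\<in>X. \<integral>x. (\<psi> a x)^2 \<partial>P) + K * (\<Sum>a\<in>X. \<integral>x. (\<rho> a x)^2 \<partial>P)"
    using IH Rb unfolding U_def by linarith
  also have "\<dots> = K * (\<Sum>a\<in>X. \<integral>x. (\<phi> a x)^2 \<partial>P)"
    by (simp add: pyth sum.distrib ring_distribs)
  finally show ?case .
qed


end



lemma obs_index_Sigma: "obs_index n s = Sigma s (\<lambda>k. {..<n k})"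
  by (auto simp: obs_index_def)

lemma obs_index_finite: "finite s \<Longrightarrow> finite (obs_index n s)"
  by (simp add: obs_index_Sigma)

lemma obs_index_mono: "s \<subseteq> t \<Longrightarrow> obs_index n s \<subseteq> obs_index n t"
  by (auto simp: obs_index_def)

lemma obs_index_sub: "s \<subseteq> t \<Longrightarrow> obs_index n s = {i \<in> obs_index n t. fst i \<in> s}"
  by (auto simp: obs_index_def)

definition MM :: "(nat \<Rightarrow> real measure) \<Rightarrow> nat \<Rightarrow> real \<Rightarrow> nat \<times> nat \<Rightarrow> real measure" where
  "MM F N \<theta> i = (if fst i \<in> {1..N} then distr (F (fst i)) borel (\<lambda>x. x + \<theta>) else return borel 0)"

lemma MM_sets: "sets (MM F N \<theta> i) = sets borel"
  by (simp add: MM_def)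

lemma space_sample_space: "space (sample_space n s) = PiE (obs_index n s) (\<lambda>_. UNIV)"
  by (simp add: sample_space_def space_PiM)

lemma sets_sample_space: "sets (sample_space n s) = sets (PiM (obs_index n s) (MM F N \<theta>))"
  unfolding sample_space_def by (rule sets_PiM_cong) (auto simp: MM_sets)

context
  fixes F :: "nat \<Rightarrow> real measure" and N :: nat
  assumes F_prob: "\<And>k. k \<in> {1..N} \<Longrightarrow> prob_space (F k)"
    and F_borel: "\<And>k. k \<in> {1..N} \<Longrightarrow> sets (F k) = sets borel"
begin

lemma MM_prob: "prob_space (MM F N \<theta> i)"
proof (cases "fst i \<in> {1..N}")
  case True
  interpret prob_space "F (fst i)" using F_prob[OF True] .
  have e: "borel_measurable (F (fst i)) = (borel_measurable borel :: (real \<Rightarrow> real) set)"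
    by (rule measurable_cong_sets[OF F_borel[OF True] refl])
  have "(\<lambda>x. x + \<theta>) \<in> (borel_measurable borel :: (real \<Rightarrow> real) set)" by simp
  then have "(\<lambda>x. x + \<theta>) \<in> measurable (F (fst i)) borel" unfolding e .
  then have d: "prob_space (distr (F (fst i)) borel (\<lambda>x. x + \<theta>))" by (rule prob_space_distr)
  have "MM F N \<theta> i = distr (F (fst i)) borel (\<lambda>x. x + \<theta>)" unfolding MM_def if_P[OF True] ..
  with d show ?thesis by simp
next
  case False
  show ?thesis unfolding MM_def if_not_P[OF False] by (rule prob_space_return) simp
qed

lemma MM_fpps: "finite I \<Longrightarrow> finite_product_prob_space (MM F N \<theta>) I"
  unfolding finite_product_prob_space_def finite_product_sigma_finite_def
    product_prob_space_def product_sigma_finite_def product_prob_space_axioms_def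
    finite_product_sigma_finite_axioms_def
  using MM_prob prob_space_imp_sigma_finite by auto

lemma MM_vdrop: "finite I \<Longrightarrow> vdrop (MM F N \<theta>) I"
  unfolding vdrop_def by (rule MM_fpps)

lemma sm_eq: "s \<subseteq> {1..N} \<Longrightarrow> sample_measure F n s \<theta> = PiM (obs_index n s) (MM F N \<theta>)"
  unfolding sample_measure_def
  by (rule PiM_cong) (auto simp: MM_def obs_index_def)

lemma restrict_transfer:
  fixes h :: "_ \<Rightarrow> real"
  assumes s: "s \<subseteq> {1..N}" and h: "h \<in> borel_measurable (PiM (obs_index n s) (MM F N \<theta>))"
  shows "integrable (PiM (obs_index n {1..N}) (MM F N \<theta>)) (\<lambda>z. h (restrict z (obs_index n s)))
      \<longleftrightarrow> integrable (PiM (obs_index n s) (MM F N \<theta>)) h"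
    and "(\<integral>z. h (restrict z (obs_index n s)) \<partial>PiM (obs_index n {1..N}) (MM F N \<theta>))
      = (\<integral>z. h z \<partial>PiM (obs_index n s) (MM F N \<theta>))"
proof -
  have fin: "finite (obs_index n {1..N})" by (simp add: obs_index_finite)
  interpret finite_product_prob_space "MM F N \<theta>" "obs_index n {1..N}" by (rule MM_fpps[OF fin])
  have sub: "obs_index n s \<subseteq> obs_index n {1..N}" using s by (rule obs_index_mono)
  have d: "distr (PiM (obs_index n {1..N}) (MM F N \<theta>)) (PiM (obs_index n s) (MM F N \<theta>)) (\<lambda>f. restrict f (obs_index n s))
     = PiM (obs_index n s) (MM F N \<theta>)"
    by (rule distr_restrict[OF sub fin, symmetric])
  have rm: "(\<lambda>f. restrict f (obs_index n s)) \<in> measurable (PiM (obs_index n {1..N}) (MM F N \<theta>)) (PiM (obs_index n s) (MM F N \<theta>))"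
    by (rule measurable_restrict_subset[OF sub])
  show "integrable (PiM (obs_index n {1..N}) (MM F N \<theta>)) (\<lambda>z. h (restrict z (obs_index n s)))
      \<longleftrightarrow> integrable (PiM (obs_index n s) (MM F N \<theta>)) h"
    using integrable_distr_eq[OF rm h] by (simp only: d)
  show "(\<integral>z. h (restrict z (obs_index n s)) \<partial>PiM (obs_index n {1..N}) (MM F N \<theta>))
      = (\<integral>z. h z \<partial>PiM (obs_index n s) (MM F N \<theta>))"
    using integral_distr[OF rm h] by (simp only: d)
qed

lemma lift_meas:
  fixes t :: "_ \<Rightarrow> real"
  assumes s: "s \<subseteq> {1..N}" and t: "t \<in> borel_measurable (sample_space n s)"
  shows "(\<lambda>z. t (restrict z (obs_index n s))) \<in> borel_measurable (PiM (obs_index n {1..N}) (MM F N \<theta>))"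
proof -
  have t': "t \<in> borel_measurable (PiM (obs_index n s) (MM F N \<theta>))"
  proof -
    have e: "borel_measurable (sample_space n s) = (borel_measurable (PiM (obs_index n s) (MM F N \<theta>)) :: (_ \<Rightarrow> real) set)"
      by (rule measurable_cong_sets[OF sets_sample_space refl])
    show ?thesis using t unfolding e .
  qed
  show ?thesis
    by (rule measurable_compose[OF measurable_restrict_subset[OF obs_index_mono[OF s]] t'])
qed

lemma lift_L2:
  assumes s: "s \<subseteq> {1..N}" and t: "equivariant_estimator F n s t"
  shows "vdrop.L2 (MM F N \<theta>) (obs_index n {1..N}) (\<lambda>z. t (restrict z (obs_index n s)))"
proof -
  have tm: "t \<in> borel_measurable (sample_space n s)" using t by (simp add: equivariant_estimator_def)
  have t': "t \<in> borel_measurable (PiM (obs_index n s) (MM F N \<theta>))"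
  proof -
    have e: "borel_measurable (sample_space n s) = (borel_measurable (PiM (obs_index n s) (MM F N \<theta>)) :: (_ \<Rightarrow> real) set)"
      by (rule measurable_cong_sets[OF sets_sample_space refl])
    show ?thesis using tm unfolding e .
  qed
  have "integrable (sample_measure F n s \<theta>) (\<lambda>z. (t z)^2)"
    using t by (simp add: equivariant_estimator_def)
  then have sq: "integrable (PiM (obs_index n s) (MM F N \<theta>)) (\<lambda>z. (t z)^2)"
    using sm_eq[OF s, of n \<theta>] by simp
  have "integrable (PiM (obs_index n {1..N}) (MM F N \<theta>)) (\<lambda>z. (t (restrict z (obs_index n s)))^2)"
    using restrict_transfer(1)[OF s, of "\<lambda>z. (t z)^2"] t' sq by simp
  moreover have fin: "finite (obs_index n {1..N})" by (simp add: obs_index_finite)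
  ultimately show ?thesis
    unfolding vdrop.L2_def[OF MM_vdrop[OF fin]] using lift_meas[OF s tm] by simp
qed


lemma comb_estimator:
  fixes t :: "nat set \<Rightarrow> ((nat \<times> nat) \<Rightarrow> real) \<Rightarrow> real" and w :: "nat set \<Rightarrow> real"
    and S :: "nat set set"
  assumes fin: "finite S" and sub: "\<And>s. s \<in> S \<Longrightarrow> s \<subseteq> {1..N}"
    and est: "\<And>s. s \<in> S \<Longrightarrow> equivariant_estimator F n s (t s)" and sw: "(\<Sum>s\<in>S. w s) = 1"
  shows "equivariant_estimator F n {1..N} (\<lambda>z. \<Sum>s\<in>S. w s * t s (restrict z (obs_index n s)))"
  unfolding equivariant_estimator_def
proof (intro conjI allI)
  have each: "(\<lambda>z. t s (restrict z (obs_index n s))) \<in> borel_measurable (sample_space n {1..N})"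
    if s: "s \<in> S" for s
  proof -
    have tm: "t s \<in> borel_measurable (PiM (obs_index n s) (\<lambda>_. borel))"
      using est[OF s] by (simp add: equivariant_estimator_def sample_space_def)
    show ?thesis unfolding sample_space_def
      by (rule measurable_compose[OF measurable_restrict_subset[OF obs_index_mono[OF sub[OF s]]] tm])
  qed
  show "(\<lambda>z. \<Sum>s\<in>S. w s * t s (restrict z (obs_index n s))) \<in> borel_measurable (sample_space n {1..N})"
    by (rule borel_measurable_sum, rule borel_measurable_times[OF borel_measurable_const each])
  show "equivariant n {1..N} (\<lambda>z. \<Sum>s\<in>S. w s * t s (restrict z (obs_index n s)))"
    unfolding equivariant_def
  proof (intro ballI allI)
    fix z :: "nat \<times> nat \<Rightarrow> real" and c :: real
    assume z: "z \<in> space (sample_space n {1..N})"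
    have one: "t s (restrict (\<lambda>i\<in>obs_index n {1..N}. z i + c) (obs_index n s)) = t s (restrict z (obs_index n s)) + c"
      if s: "s \<in> S" for s
    proof -
      have sub': "obs_index n s \<subseteq> obs_index n {1..N}" by (rule obs_index_mono[OF sub[OF s]])
      have e1: "restrict (\<lambda>i\<in>obs_index n {1..N}. z i + c) (obs_index n s)
          = (\<lambda>i\<in>obs_index n s. restrict z (obs_index n s) i + c)"
        using sub' by (auto simp: restrict_def fun_eq_iff)
      have zs: "restrict z (obs_index n s) \<in> space (sample_space n s)"
        by (simp add: space_sample_space)
      have "equivariant n s (t s)" using est[OF s] by (simp add: equivariant_estimator_def)
      then show ?thesis unfolding e1 equivariant_def using zs by blast
    qed
    have "(\<Sum>s\<in>S. w s * t s (restrict (\<lambda>i\<in>obs_index n {1..N}. z i + c) (obs_index n s)))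
        = (\<Sum>s\<in>S. w s * t s (restrict z (obs_index n s)) + w s * c)"
      using one by (intro sum.cong) (auto simp: ring_distribs)
    also have "\<dots> = (\<Sum>s\<in>S. w s * t s (restrict z (obs_index n s))) + c"
      using sw by (simp add: sum.distrib sum_distrib_right[symmetric])
    finally show "(\<Sum>s\<in>S. w s * t s (restrict (\<lambda>i\<in>obs_index n {1..N}. z i + c) (obs_index n s)))
        = (\<Sum>s\<in>S. w s * t s (restrict z (obs_index n s))) + c" .
  qed
  fix \<theta>
  have fin: "finite (obs_index n {1..N})" by (simp add: obs_index_finite)
  interpret V: vdrop "MM F N \<theta>" "obs_index n {1..N}" fst by (rule MM_vdrop[OF fin])
  have "V.L2 (\<lambda>z. \<Sum>s\<in>S. w s * t s (restrict z (obs_index n s)))"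
    by (rule V.L2_sum, rule V.L2_cmult, rule lift_L2[OF sub est])
  then show "integrable (sample_measure F n {1..N} \<theta>) (\<lambda>z. (\<Sum>s\<in>S. w s * t s (restrict z (obs_index n s)))\<^sup>2)"
    unfolding V.L2_def using sm_eq[of "{1..N}" n \<theta>] by simp
qed

end

lemma count_subsets:
  assumes m: "1 \<le> m"
  shows "card {s \<in> {s. s \<subseteq> {1..N} \<and> card s = m}. j \<in> s} \<le> (N - 1) choose (m - 1)"
proof (cases "j \<in> {1..N}")
  case False
  then have e: "{s \<in> {s. s \<subseteq> {1..N} \<and> card s = m}. j \<in> s} = {}" by auto
  show ?thesis unfolding e by simp
next
  case True
  define U where "U = {u. u \<subseteq> {1..N} - {j} \<and> card u = m - 1}"
  have finU: "finite U" unfolding U_def by (rule finite_subset[of _ "Pow ({1..N} - {j})"]) auto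
  have "{s \<in> {s. s \<subseteq> {1..N} \<and> card s = m}. j \<in> s} \<subseteq> insert j ` U"
  proof
    fix s assume s: "s \<in> {s \<in> {s. s \<subseteq> {1..N} \<and> card s = m}. j \<in> s}"
    then have fs: "finite s" using finite_subset[of s "{1..N}"] by auto
    have "s = insert j (s - {j})" using s by auto
    moreover have "s - {j} \<in> U" using s fs by (auto simp: U_def card_Diff_singleton)
    ultimately show "s \<in> insert j ` U" by blast
  qed
  then have "card {s \<in> {s. s \<subseteq> {1..N} \<and> card s = m}. j \<in> s} \<le> card (insert j ` U)"
    using finU by (intro card_mono) auto
  also have "\<dots> \<le> card U" by (rule card_image_le[OF finU])
  also have "card U = card ({1..N} - {j}) choose (m - 1)" unfolding U_def by (rule n_subsets) simp
  also have "card ({1..N} - {j}) = N - 1" using True by simp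
  finally show ?thesis .
qed




theorem theorem3:
  fixes N m :: nat and F :: "nat \<Rightarrow> real measure" and n :: "nat \<Rightarrow> nat"
    and t :: "nat set \<Rightarrow> ((nat \<times> nat) \<Rightarrow> real) \<Rightarrow> real" and \<theta> :: real
  assumes F_prob: "\<And>k. k \<in> {1..N} \<Longrightarrow> prob_space (F k)"
    and F_borel: "\<And>k. k \<in> {1..N} \<Longrightarrow> sets (F k) = sets borel"
    and F_var: "\<And>k. k \<in> {1..N} \<Longrightarrow> integrable (F k) (\<lambda>x. x\<^sup>2)"
    and n_pos: "\<And>k. k \<in> {1..N} \<Longrightarrow> n k \<ge> 1"
    and m: "1 \<le> m" "m \<le> N"
    and t_all: "is_pitman F n {1..N} (t {1..N})"
    and t_sub: "\<And>s. s \<subseteq> {1..N} \<Longrightarrow> card s = m \<Longrightarrow> is_pitman F n s (t s)"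
  shows "inverse (ennreal (est_var (sample_measure F n {1..N} \<theta>) (t {1..N})))
     \<ge> (\<Sum>s | s \<subseteq> {1..N} \<and> card s = m.
            inverse (ennreal (est_var (sample_measure F n s \<theta>) (t s))))
        / of_nat ((N - 1) choose (m - 1))"
proof -
  define I where "I = obs_index n {1..N}"
  define Sm where "Sm = {s. s \<subseteq> {1..N} \<and> card s = m}"
  define K where "K = (N - 1) choose (m - 1)"
  define Pm where "Pm = PiM I (MM F N \<theta>)"
  have finI: "finite I" unfolding I_def by (simp add: obs_index_finite)
  interpret V: vdrop "MM F N \<theta>" I fst by (rule MM_vdrop[OF F_prob F_borel finI])
  have finSm: "finite Sm" unfolding Sm_def by (rule finite_subset[of _ "Pow {1..N}"]) auto
  have Smne: "{1..m} \<in> Sm" using m unfolding Sm_def by auto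
  have sub: "s \<in> Sm \<Longrightarrow> s \<subseteq> {1..N}" for s by (simp add: Sm_def)
  have smP: "sample_measure F n {1..N} \<theta> = Pm"
    unfolding Pm_def I_def by (rule sm_eq[OF F_prob F_borel order_refl])
  have smS: "sample_measure F n s \<theta> = PiM (obs_index n s) (MM F N \<theta>)" if "s \<in> Sm" for s
    by (rule sm_eq[OF F_prob F_borel sub[OF that]])
  define T where "T s z = t s (restrict z (obs_index n s))" for s z
  define E where "E s = (\<integral>z. t s z \<partial>sample_measure F n s \<theta>)" for s
  define v where "v s = est_var (sample_measure F n s \<theta>) (t s)" for s
  define V where "V = est_var (sample_measure F n {1..N} \<theta>) (t {1..N})"
  have est: "equivariant_estimator F n s (t s)" if "s \<in> Sm" for s
    using t_sub[of s] that by (simp add: Sm_def is_pitman_def)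
  have L2T: "V.L2 (T s)" if "s \<in> Sm" for s
    unfolding T_def[abs_def] I_def by (rule lift_L2[OF F_prob F_borel sub[OF that] est[OF that]])
  have intT: "integrable Pm (T s)" if "s \<in> Sm" for s
    unfolding Pm_def by (rule V.L2_int[OF L2T[OF that]])
  have tmeas: "t s \<in> borel_measurable (PiM (obs_index n s) (MM F N \<theta>))" if "s \<in> Sm" for s
  proof -
    have e: "borel_measurable (sample_space n s) = (borel_measurable (PiM (obs_index n s) (MM F N \<theta>)) :: (_ \<Rightarrow> real) set)"
      by (rule measurable_cong_sets[OF sets_sample_space refl])
    show ?thesis using est[OF that] unfolding e equivariant_estimator_def by blast
  qed
  have ET: "(\<integral>z. T s z \<partial>Pm) = E s" if "s \<in> Sm" for s
    unfolding T_def Pm_def I_def E_def smS[OF that]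
    by (rule restrict_transfer(2)[OF F_prob F_borel sub[OF that] tmeas[OF that]])
  have vT: "v s = (\<integral>z. (T s z - E s)^2 \<partial>Pm)" if "s \<in> Sm" for s
  proof -
    have hm: "(\<lambda>z. (t s z - E s)^2) \<in> borel_measurable (PiM (obs_index n s) (MM F N \<theta>))"
      using tmeas[OF that] by measurable
    have "v s = (\<integral>z. (t s z - E s)^2 \<partial>PiM (obs_index n s) (MM F N \<theta>))"
      unfolding v_def est_var_def E_def smS[OF that] ..
    also have "\<dots> = (\<integral>z. (T s z - E s)^2 \<partial>Pm)"
      unfolding T_def Pm_def I_def
      by (rule restrict_transfer(2)[OF F_prob F_borel sub[OF that] hm, symmetric])
    finally show ?thesis .
  qed
  have KEY: "V \<le> K * (\<Sum>s\<in>Sm. (w s)^2 * v s)" if sw: "(\<Sum>s\<in>Sm. w s) = 1" for w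
  proof -
    define Ts where "Ts z = (\<Sum>s\<in>Sm. w s * T s z)" for z
    have "equivariant_estimator F n {1..N} Ts"
      unfolding Ts_def T_def by (rule comb_estimator[OF F_prob F_borel finSm sub est sw])
    then have "V \<le> est_var (sample_measure F n {1..N} \<theta>) Ts"
      using t_all unfolding V_def is_pitman_def by blast
    also have "\<dots> = (\<integral>z. (Ts z - (\<integral>y. Ts y \<partial>Pm))^2 \<partial>Pm)"
      unfolding est_var_def smP ..
    also have "(\<integral>y. Ts y \<partial>Pm) = (\<Sum>s\<in>Sm. w s * E s)"
      unfolding Ts_def using intT ET
      by (subst Bochner_Integration.integral_sum) auto
    finally have V1: "V \<le> (\<integral>z. (Ts z - (\<Sum>s\<in>Sm. w s * E s))^2 \<partial>Pm)" .
    define \<phi> where "\<phi> s z = w s * (T s z - E s)" for s z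
    have eq: "Ts z - (\<Sum>s\<in>Sm. w s * E s) = (\<Sum>s\<in>Sm. \<phi> s z)" for z
      unfolding Ts_def \<phi>_def by (simp add: sum_subtractf[symmetric] right_diff_distrib)
    have L2\<phi>: "V.L2 (\<phi> s)" if "s \<in> Sm" for s
      unfolding \<phi>_def[abs_def] by (intro V.L2_cmult V.L2_diff L2T[OF that] V.L2_const)
    have dep\<phi>: "V.dep s (\<phi> s)" if "s \<in> Sm" for s
      unfolding V.dep_def
    proof (intro allI impI)
      fix x y :: "nat \<times> nat \<Rightarrow> real" assume a: "\<forall>i\<in>I. fst i \<in> s \<longrightarrow> x i = y i"
      have "restrict x (obs_index n s) = restrict y (obs_index n s)"
        using a obs_index_sub[OF sub[OF that], of n] unfolding I_def by (auto simp: restrict_def fun_eq_iff)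
      then show "\<phi> s x = \<phi> s y" unfolding \<phi>_def T_def by simp
    qed
    have mean\<phi>: "(\<integral>z. \<phi> s z \<partial>Pm) = 0" if "s \<in> Sm" for s
    proof -
      have ic: "integrable Pm (\<lambda>z. E s)" unfolding Pm_def by (rule V.L2_int[OF V.L2_const])
      have c1: "(\<integral>z. E s \<partial>Pm) = E s" unfolding Pm_def by (simp add: V.P.prob_space)
      have "(\<integral>z. \<phi> s z \<partial>Pm) = w s * (\<integral>z. T s z - E s \<partial>Pm)"
        unfolding \<phi>_def by simp
      also have "(\<integral>z. T s z - E s \<partial>Pm) = (\<integral>z. T s z \<partial>Pm) - (\<integral>z. E s \<partial>Pm)"
        by (rule Bochner_Integration.integral_diff[OF intT[OF that] ic])
      also have "\<dots> = 0" using ET[OF that] c1 by simp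
      finally show ?thesis by simp
    qed
    have deg: "\<forall>j. card {a\<in>Sm. j \<in> a} \<le> K"
      unfolding Sm_def K_def using count_subsets[OF m(1)] by blast
    have "(\<integral>z. (\<Sum>s\<in>Sm. \<phi> s z)^2 \<partial>Pm) \<le> K * (\<Sum>s\<in>Sm. \<integral>z. (\<phi> s z)^2 \<partial>Pm)"
      unfolding Pm_def
      by (rule V.vdrop_main[of "{1..N}" Sm \<phi> "\<lambda>s. s" K]) (use finSm L2\<phi> dep\<phi> mean\<phi> deg sub in \<open>auto simp: Pm_def\<close>)
    also have "(\<Sum>s\<in>Sm. \<integral>z. (\<phi> s z)^2 \<partial>Pm) = (\<Sum>s\<in>Sm. (w s)^2 * v s)"
    proof (rule sum.cong[OF refl])
      fix s assume s: "s \<in> Sm"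
      have "(\<integral>z. (\<phi> s z)^2 \<partial>Pm) = (\<integral>z. (w s)^2 * (T s z - E s)^2 \<partial>Pm)"
        unfolding \<phi>_def by (simp add: power_mult_distrib)
      also have "\<dots> = (w s)^2 * v s" using vT[OF s] by simp
      finally show "(\<integral>z. (\<phi> s z)^2 \<partial>Pm) = (w s)^2 * v s" .
    qed
    finally show ?thesis using V1 eq by simp
  qed
  have V0: "0 \<le> V" unfolding V_def est_var_def by (intro integral_nonneg_AE) auto
  have v0: "0 \<le> v s" for s unfolding v_def est_var_def by (intro integral_nonneg_AE) auto
  have Kpos: "0 < K" unfolding K_def using m by simp
  have rhs_eq: "(\<Sum>s | s \<subseteq> {1..N} \<and> card s = m. inverse (ennreal (est_var (sample_measure F n s \<theta>) (t s))))
      = (\<Sum>s\<in>Sm. inverse (ennreal (v s)))" unfolding Sm_def v_def ..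
  have lhs_eq: "inverse (ennreal (est_var (sample_measure F n {1..N} \<theta>) (t {1..N}))) = inverse (ennreal V)"
    unfolding V_def ..
  show ?thesis
  proof (cases "\<exists>s0\<in>Sm. v s0 = 0")
    case True
    then obtain s0 where s0: "s0 \<in> Sm" "v s0 = 0" by blast
    define w where "w s = (if s = s0 then 1 else 0::real)" for s
    have sw: "(\<Sum>s\<in>Sm. w s) = 1" unfolding w_def using s0 finSm by (simp add: sum.delta)
    have "(\<Sum>s\<in>Sm. (w s)^2 * v s) = 0" by (rule sum.neutral) (auto simp: w_def s0)
    then have "V = 0" using KEY[OF sw] V0 by simp
    then show ?thesis unfolding lhs_eq by simp
  next
    case False
    then have vpos: "s \<in> Sm \<Longrightarrow> 0 < v s" for s using v0[of s] by force
    define Z where "Z = (\<Sum>s\<in>Sm. 1 / v s)"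
    have Zpos: "0 < Z" unfolding Z_def
      using finSm Smne vpos by (intro sum_pos) auto
    define w where "w s = (1 / v s) / Z" for s
    have "(\<Sum>s\<in>Sm. w s) = (\<Sum>s\<in>Sm. 1 / v s) / Z" unfolding w_def by (rule sum_divide_distrib[symmetric])
    then have sw: "(\<Sum>s\<in>Sm. w s) = 1" using Zpos unfolding Z_def[symmetric] by simp
    have "(\<Sum>s\<in>Sm. (w s)^2 * v s) = (\<Sum>s\<in>Sm. (1 / v s) / Z^2)"
      using vpos Zpos by (intro sum.cong refl) (auto simp: w_def power2_eq_square field_simps)
    also have "\<dots> = (\<Sum>s\<in>Sm. 1 / v s) / Z^2" by (rule sum_divide_distrib[symmetric])
    also have "\<dots> = 1 / Z" using Zpos unfolding Z_def[symmetric] by (simp add: power2_eq_square)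
    finally have "V \<le> K * (1 / Z)" using KEY[OF sw] by simp
    then have VZ: "V * Z \<le> K" using Zpos by (simp add: field_simps)
    have "(\<Sum>s\<in>Sm. inverse (ennreal (v s))) = (\<Sum>s\<in>Sm. ennreal (1 / v s))"
      using vpos by (intro sum.cong refl) (simp add: inverse_ennreal inverse_eq_divide)
    also have "\<dots> = ennreal Z" unfolding Z_def using vpos by (intro sum_ennreal) (simp add: less_imp_le)
    finally have se: "(\<Sum>s\<in>Sm. inverse (ennreal (v s))) = ennreal Z" .
    have r: "(\<Sum>s\<in>Sm. inverse (ennreal (v s))) / of_nat K = ennreal (Z / K)"
      unfolding se ennreal_of_nat_eq_real_of_nat using Zpos Kpos by (simp add: divide_ennreal)
    show ?thesis
    proof (cases "V = 0")
      case True then show ?thesis unfolding lhs_eq by simp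
    next
      case False
      then have Vp: "0 < V" using V0 by simp
      have "Z / K \<le> 1 / V" using VZ Vp Kpos by (simp add: field_simps)
      then have "ennreal (Z / K) \<le> ennreal (1 / V)" by (rule ennreal_leI)
      then show ?thesis unfolding lhs_eq rhs_eq r[unfolded K_def] inverse_ennreal[OF Vp]
        by (simp add: inverse_eq_divide K_def)
    qed
  qed
qed


end
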